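(* Let $X_N=V_q\otimes W_p$ with $V_q\subset H^1_0(D)$ and $W_p\subset L^2_\Gamma(\mathbb{R}^\mu)$. If $\gamma\in L^r_\Gamma(\mathbb{R}^\mu)$ and $W_p\subset L^s_\Gamma(\mathbb{R}^\mu)$ for some $r\ge1$ and $s\ge2$ with $\frac{2}{s}+\frac{1}{r}=1$, then $X_N\subset X^{(\gamma)}$. In particular, $X_N\subset X^{(\gamma)}$ if $\gamma\in L^1_\Gamma(\mathbb{R}^\mu)$ and $W_p\subset L^\infty_\Gamma(\mathbb{R}^\mu)$.
   Context: $D\subset\mathbb{R}^d$ bounded open; $\Gamma$ a probability measure on $\mathbb{R}^\mu$, $E_\Gamma$ integration against it; $\gamma:\mathbb{R}^\mu\to\mathbb{R}$ a positive measurable function (in the paper, the upper bound of the coefficient field). $X^{(\gamma)}$ is the space of functions $v:D\times\mathbb{R}^\mu\to\mathbb{R}$ with $\|v\|_{X^{(\gamma)}}^2=E_\Gamma(\gamma\int_D\|\nabla v\|_2^2d\mathbf{x})<\infty$. *)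

theory Defs
  imports "HOL-Probability.Probability"
begin

fun dirderivs :: "('a::euclidean_space \<Rightarrow> real) \<Rightarrow> 'a list \<Rightarrow> ('a \<Rightarrow> real)" where
  "dirderivs f [] = f"
| "dirderivs f (e # es) = (\<lambda>x. frechet_derivative (dirderivs f es) (at x) e)"

definition smooth_fun :: "('a::euclidean_space \<Rightarrow> real) \<Rightarrow> bool" where
  "smooth_fun f \<longleftrightarrow> (\<forall>es x. dirderivs f es differentiable (at x))"

definition test_fun :: "'a::euclidean_space set \<Rightarrow> ('a \<Rightarrow> real) \<Rightarrow> bool" where
  "test_fun D \<phi> \<longleftrightarrow> smooth_fun \<phi> \<and> compact (closure {x. \<phi> x \<noteq> 0})
      \<and> closure {x. \<phi> x \<noteq> 0} \<subseteq> D"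

definition grad :: "('a::euclidean_space \<Rightarrow> real) \<Rightarrow> 'a \<Rightarrow> 'a" where
  "grad f x = (\<Sum>b\<in>Basis. frechet_derivative f (at x) b *\<^sub>R b)"

definition weak_grad :: "'a::euclidean_space set \<Rightarrow> ('a \<Rightarrow> real) \<Rightarrow> ('a \<Rightarrow> 'a) \<Rightarrow> bool" where
  "weak_grad D u g \<longleftrightarrow>
     u \<in> borel_measurable lborel \<and> g \<in> borel_measurable lborel \<and>
     (\<forall>K. compact K \<and> K \<subseteq> D \<longrightarrow> set_integrable lborel K u \<and> set_integrable lborel K g) \<and>
     (\<forall>\<phi>. test_fun D \<phi> \<longrightarrow>
        (\<integral>x\<in>D. u x *\<^sub>R grad \<phi> x \<partial>lborel) = - (\<integral>x\<in>D. \<phi> x *\<^sub>R g x \<partial>lborel))"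

definition H10 :: "'a::euclidean_space set \<Rightarrow> ('a \<Rightarrow> real) \<Rightarrow> bool" where
  "H10 D u \<longleftrightarrow> (\<exists>g. weak_grad D u g \<and>
     (\<integral>\<^sup>+x\<in>D. ennreal ((u x)\<^sup>2) \<partial>lborel) < \<infinity> \<and>
     (\<integral>\<^sup>+x\<in>D. ennreal ((norm (g x))\<^sup>2) \<partial>lborel) < \<infinity> \<and>
     (\<exists>\<phi>. (\<forall>n. test_fun D (\<phi> n)) \<and>
        (\<lambda>n. \<integral>\<^sup>+x\<in>D. ennreal ((\<phi> n x - u x)\<^sup>2) \<partial>lborel) \<longlonglongrightarrow> 0 \<and>
        (\<lambda>n. \<integral>\<^sup>+x\<in>D. ennreal ((norm (grad (\<phi> n) x - g x))\<^sup>2) \<partial>lborel) \<longlonglongrightarrow> 0))"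

definition Lp_Gamma :: "'b measure \<Rightarrow> real \<Rightarrow> ('b \<Rightarrow> real) set" where
  "Lp_Gamma \<Gamma> p = {w. w \<in> borel_measurable \<Gamma> \<and>
       (\<integral>\<^sup>+y. ennreal (\<bar>w y\<bar> powr p) \<partial>\<Gamma>) < \<infinity>}"

definition Linf_Gamma :: "'b measure \<Rightarrow> ('b \<Rightarrow> real) set" where
  "Linf_Gamma \<Gamma> = {w. w \<in> borel_measurable \<Gamma> \<and> (\<exists>C. AE y in \<Gamma>. \<bar>w y\<bar> \<le> C)}"

definition tensor_space :: "('a \<Rightarrow> real) set \<Rightarrow> ('b \<Rightarrow> real) set \<Rightarrow> ('a \<times> 'b \<Rightarrow> real) set" where
  "tensor_space V W = {f. \<exists>(n::nat) c v w. (\<forall>i<n. v i \<in> V \<and> w i \<in> W) \<and>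
       f = (\<lambda>(x,y). \<Sum>i<n. c i * v i x * w i y)}"

definition Xgamma :: "'a::euclidean_space set \<Rightarrow> 'b measure \<Rightarrow> ('b \<Rightarrow> real) \<Rightarrow> ('a \<times> 'b \<Rightarrow> real) set" where
  "Xgamma D \<Gamma> \<gamma> = {v. \<exists>G :: 'a \<times> 'b \<Rightarrow> 'a.
       G \<in> borel_measurable (lborel \<Otimes>\<^sub>M \<Gamma>) \<and>
       (AE y in \<Gamma>. H10 D (\<lambda>x. v (x, y)) \<and> weak_grad D (\<lambda>x. v (x, y)) (\<lambda>x. G (x, y))) \<and>
       (\<integral>\<^sup>+y. ennreal (\<gamma> y) * (\<integral>\<^sup>+x\<in>D. ennreal ((norm (G (x, y)))\<^sup>2) \<partial>lborel) \<partial>\<Gamma>) < \<infinity>}"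

end

theory Submission imports Defs begin

lemma fd_add:
  assumes "f differentiable at x" "g differentiable at x"
  shows "frechet_derivative (\<lambda>x. f x + g x) (at x) = (\<lambda>h. frechet_derivative f (at x) h + frechet_derivative g (at x) h)"
  using frechet_derivative_at[OF has_derivative_add[OF assms(1)[unfolded frechet_derivative_works] assms(2)[unfolded frechet_derivative_works]]]
  by simp

lemma fd_scale:
  fixes f :: "'a::real_normed_vector \<Rightarrow> real"
  assumes "f differentiable at x"
  shows "frechet_derivative (\<lambda>x. c * f x) (at x) = (\<lambda>h. c * frechet_derivative f (at x) h)"
  using frechet_derivative_at[OF has_derivative_mult_right[OF assms(1)[unfolded frechet_derivative_works]]]
  by simp

lemma dirderivs_add:
  assumes "smooth_fun f" "smooth_fun g"
  shows "dirderivs (\<lambda>x. f x + g x) es = (\<lambda>x. dirderivs f es x + dirderivs g es x)"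
proof (induction es)
  case Nil then show ?case by simp
next
  case (Cons e es)
  show ?case
    using assms by (auto simp: Cons fd_add smooth_fun_def)
qed

lemma dirderivs_scale:
  assumes "smooth_fun f"
  shows "dirderivs (\<lambda>x. c * f x) es = (\<lambda>x. c * dirderivs f es x)"
proof (induction es)
  case Nil then show ?case by simp
next
  case (Cons e es)
  show ?case
    using assms by (auto simp: Cons fd_scale smooth_fun_def)
qed

lemma dirderivs_zero: "dirderivs (\<lambda>x. 0) es = (\<lambda>x. 0)"
  by (induction es) auto

lemma smooth_add: "smooth_fun f \<Longrightarrow> smooth_fun g \<Longrightarrow> smooth_fun (\<lambda>x. f x + g x)"
  unfolding smooth_fun_def[of "\<lambda>x. f x + g x"]
  by (simp add: dirderivs_add) (auto simp: smooth_fun_def)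

lemma smooth_scale: "smooth_fun f \<Longrightarrow> smooth_fun (\<lambda>x. c * f x)"
  unfolding smooth_fun_def[of "\<lambda>x. c * f x"]
  by (simp add: dirderivs_scale) (auto simp: smooth_fun_def)

lemma test_fun_zero: "test_fun D (\<lambda>x. 0)"
  by (simp add: test_fun_def smooth_fun_def dirderivs_zero)

lemma compact_closure_sub:
  fixes S :: "'a::euclidean_space set"
  assumes "S \<subseteq> K" "compact K" shows "compact (closure S)"
  using assms bounded_subset compact_closure compact_imp_bounded by blast

lemma test_fun_add:
  assumes "test_fun D f" "test_fun D g" shows "test_fun D (\<lambda>x. f x + g x)"
proof -
  have sub: "closure {x. f x + g x \<noteq> 0} \<subseteq> closure {x. f x \<noteq> 0} \<union> closure {x. g x \<noteq> 0}"
  proof -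
    have "{x. f x + g x \<noteq> 0} \<subseteq> {x. f x \<noteq> 0} \<union> {x. g x \<noteq> 0}" by auto
    then have "closure {x. f x + g x \<noteq> 0} \<subseteq> closure ({x. f x \<noteq> 0} \<union> {x. g x \<noteq> 0})"
      by (rule closure_mono)
    then show ?thesis by (simp add: closure_Un)
  qed
  have sub2: "{x. f x + g x \<noteq> 0} \<subseteq> closure {x. f x \<noteq> 0} \<union> closure {x. g x \<noteq> 0}"
    using sub closure_subset[of "{x. f x + g x \<noteq> 0}"] by blast
  have "compact (closure {x. f x + g x \<noteq> 0})"
    using compact_closure_sub[OF sub2 compact_Un] assms unfolding test_fun_def by blast
  then show ?thesis using assms sub unfolding test_fun_def
    by (auto intro: smooth_add)
qed

lemma test_fun_scale:
  assumes "test_fun D f" shows "test_fun D (\<lambda>x. c * f x)"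
proof -
  have sub: "closure {x. c * f x \<noteq> 0} \<subseteq> closure {x. f x \<noteq> 0}"
    by (intro closure_mono) auto
  have sub2: "{x. c * f x \<noteq> 0} \<subseteq> closure {x. f x \<noteq> 0}"
    using closure_subset[of "{x. f x \<noteq> 0}"] by auto
  show ?thesis using assms sub compact_closure_sub[OF sub2] unfolding test_fun_def
    by (auto intro: smooth_scale)
qed

lemma smooth_diff: "smooth_fun f \<Longrightarrow> f differentiable at x"
  unfolding smooth_fun_def by (metis dirderivs.simps(1))

lemma grad_add: "smooth_fun f \<Longrightarrow> smooth_fun g \<Longrightarrow> grad (\<lambda>x. f x + g x) x = grad f x + grad g x"
  by (simp add: grad_def fd_add smooth_diff scaleR_add_left sum.distrib)

lemma grad_scale: "smooth_fun f \<Longrightarrow> grad (\<lambda>x. c * f x) x = c *\<^sub>R grad f x"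
  by (simp add: grad_def fd_scale smooth_diff scaleR_sum_right)

lemma smooth_cont: "smooth_fun f \<Longrightarrow> continuous_on UNIV f"
  by (meson continuous_at_imp_continuous_on differentiable_imp_continuous_within smooth_diff)

lemma grad_cont:
  assumes "smooth_fun f" shows "continuous_on UNIV (grad f)"
proof -
  have "grad f = (\<lambda>x. \<Sum>b\<in>Basis. dirderivs f [b] x *\<^sub>R b)"
    by (simp add: grad_def fun_eq_iff)
  moreover have "continuous_on UNIV (dirderivs f [b])" for b
    using assms unfolding smooth_fun_def
    by (meson continuous_at_imp_continuous_on differentiable_imp_continuous_within)
  ultimately show ?thesis
    by (auto intro!: continuous_on_sum continuous_on_scaleR continuous_on_const)
qed

lemma grad_zero_outside:
  assumes "smooth_fun f" "x \<notin> closure {x. f x \<noteq> 0}"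
  shows "grad f x = 0"
proof -
  have "frechet_derivative f (at x) = frechet_derivative (\<lambda>x. 0) (at x)"
    apply (rule frechet_derivative_transform_within_open[where X="- closure {x. f x \<noteq> 0}"])
    using assms smooth_diff closure_subset[of "{x. f x \<noteq> 0}"] by auto
  then show ?thesis by (simp add: grad_def)
qed


definition H10g :: "'a::euclidean_space set \<Rightarrow> ('a \<Rightarrow> real) \<Rightarrow> ('a \<Rightarrow> 'a) \<Rightarrow> bool" where
  "H10g D u g \<longleftrightarrow> weak_grad D u g \<and>
     (\<integral>\<^sup>+x\<in>D. ennreal ((u x)\<^sup>2) \<partial>lborel) < \<infinity> \<and>
     (\<integral>\<^sup>+x\<in>D. ennreal ((norm (g x))\<^sup>2) \<partial>lborel) < \<infinity> \<and>
     (\<exists>\<phi>. (\<forall>n. test_fun D (\<phi> n)) \<and>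
        (\<lambda>n. \<integral>\<^sup>+x\<in>D. ennreal ((\<phi> n x - u x)\<^sup>2) \<partial>lborel) \<longlonglongrightarrow> 0 \<and>
        (\<lambda>n. \<integral>\<^sup>+x\<in>D. ennreal ((norm (grad (\<phi> n) x - g x))\<^sup>2) \<partial>lborel) \<longlonglongrightarrow> 0)"

lemma H10_iff: "H10 D u \<longleftrightarrow> (\<exists>g. H10g D u g)"
  by (simp add: H10_def H10g_def)

lemma set_integrable_bound_outside:
  fixes u :: "'a::euclidean_space \<Rightarrow> 'c::{banach,second_countable_topology}"
    and F :: "'a \<Rightarrow> 'e::{banach,second_countable_topology}"
  assumes "set_integrable lborel K u" "K \<subseteq> D" "D \<in> sets lborel"
    "F \<in> borel_measurable lborel" "\<And>x. x \<in> K \<Longrightarrow> norm (F x) \<le> M * norm (u x)"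
    "\<And>x. x \<notin> K \<Longrightarrow> F x = 0"
  shows "set_integrable lborel D F"
proof -
  have "set_integrable lborel K (\<lambda>x. M *\<^sub>R u x)"
    using assms(1) by (rule set_integrable_scaleR_right)
  then have i: "integrable lborel (\<lambda>x. indicator K x *\<^sub>R (M *\<^sub>R u x))"
    unfolding set_integrable_def .
  show ?thesis unfolding set_integrable_def
  proof (rule Bochner_Integration.integrable_bound[OF i])
    show "(\<lambda>x. indicator D x *\<^sub>R F x) \<in> borel_measurable lborel"
      using assms(3,4) by (intro borel_measurable_scaleR borel_measurable_indicator) auto
    have "norm (indicator D x *\<^sub>R F x) \<le> norm (indicator K x *\<^sub>R (M *\<^sub>R u x))" for x
    proof (cases "x \<in> K")
      case True
      then have "x \<in> D" using assms(2) by auto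
      have "M * norm (u x) \<le> \<bar>M\<bar> * norm (u x)" by (simp add: mult_right_mono)
      then show ?thesis using True \<open>x \<in> D\<close> assms(5)[OF True] by simp
    next
      case False
      then show ?thesis using assms(6) by simp
    qed
    then show "AE x in lborel. norm (indicator D x *\<^sub>R F x) \<le> norm (indicator K x *\<^sub>R (M *\<^sub>R u x))"
      by simp
  qed
qed

lemma tf_support:
  assumes "test_fun D \<phi>"
  shows "compact (closure {x. \<phi> x \<noteq> 0})" "closure {x. \<phi> x \<noteq> 0} \<subseteq> D"
    "\<And>x. x \<notin> closure {x. \<phi> x \<noteq> 0} \<Longrightarrow> \<phi> x = 0"
    "\<And>x. x \<notin> closure {x. \<phi> x \<noteq> 0} \<Longrightarrow> grad \<phi> x = 0"
  using assms closure_subset[of "{x. \<phi> x \<noteq> 0}"] grad_zero_outside[of \<phi>]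
  unfolding test_fun_def by auto

lemma bounded_on_compact:
  fixes f :: "'a::euclidean_space \<Rightarrow> 'b::real_normed_vector"
  assumes "continuous_on UNIV f" "compact K"
  obtains B where "\<And>x. x \<in> K \<Longrightarrow> norm (f x) \<le> B"
proof -
  have "bounded (f ` K)"
    using compact_imp_bounded[OF compact_continuous_image[OF continuous_on_subset[OF assms(1)] assms(2)]]
    by simp
  then show ?thesis using that unfolding bounded_iff by auto
qed

lemma tf_int1:
  assumes "weak_grad D u g" "test_fun D \<phi>" "open D"
  shows "set_integrable lborel D (\<lambda>x. u x *\<^sub>R grad \<phi> x)"
proof -
  let ?K = "closure {x. \<phi> x \<noteq> 0}"
  have sm: "smooth_fun \<phi>" using assms(2) by (simp add: test_fun_def)
  obtain B where B: "\<And>x. x \<in> ?K \<Longrightarrow> norm (grad \<phi> x) \<le> B"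
    using bounded_on_compact[OF grad_cont[OF sm] tf_support(1)[OF assms(2)]] by blast
  have ui: "set_integrable lborel ?K u"
    using assms(1) tf_support(1,2)[OF assms(2)] unfolding weak_grad_def by blast
  have um: "u \<in> borel_measurable lborel"
    using assms(1) unfolding weak_grad_def by blast
  show ?thesis
  proof (rule set_integrable_bound_outside[OF ui tf_support(2)[OF assms(2)]])
    show "D \<in> sets lborel" using assms(3) by simp
    show "(\<lambda>x. u x *\<^sub>R grad \<phi> x) \<in> borel_measurable lborel"
      using um borel_measurable_continuous_onI[OF grad_cont[OF sm]]
      by (intro borel_measurable_scaleR) auto
    show "norm (u x *\<^sub>R grad \<phi> x) \<le> B * norm (u x)" if "x \<in> ?K" for x
      using mult_left_mono[OF B[OF that] abs_ge_zero[of "u x"]] by (simp add: mult.commute)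
    show "u x *\<^sub>R grad \<phi> x = 0" if "x \<notin> ?K" for x
      using tf_support(4)[OF assms(2) that] by simp
  qed
qed

lemma tf_int2:
  assumes "weak_grad D u g" "test_fun D \<phi>" "open D"
  shows "set_integrable lborel D (\<lambda>x. \<phi> x *\<^sub>R g x)"
proof -
  let ?K = "closure {x. \<phi> x \<noteq> 0}"
  have sm: "smooth_fun \<phi>" using assms(2) by (simp add: test_fun_def)
  obtain B where B: "\<And>x. x \<in> ?K \<Longrightarrow> norm (\<phi> x) \<le> B"
    using bounded_on_compact[OF smooth_cont[OF sm] tf_support(1)[OF assms(2)]] by blast
  have gi: "set_integrable lborel ?K g"
    using assms(1) tf_support(1,2)[OF assms(2)] unfolding weak_grad_def by blast
  have gm: "g \<in> borel_measurable lborel"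
    using assms(1) unfolding weak_grad_def by blast
  show ?thesis
  proof (rule set_integrable_bound_outside[OF gi tf_support(2)[OF assms(2)]])
    show "D \<in> sets lborel" using assms(3) by simp
    show "(\<lambda>x. \<phi> x *\<^sub>R g x) \<in> borel_measurable lborel"
      using gm borel_measurable_continuous_onI[OF smooth_cont[OF sm]]
      by (intro borel_measurable_scaleR) auto
    show "norm (\<phi> x *\<^sub>R g x) \<le> B * norm (g x)" if "x \<in> ?K" for x
      using B[OF that] by (simp add: mult_right_mono)
    show "\<phi> x *\<^sub>R g x = 0" if "x \<notin> ?K" for x
      using tf_support(3)[OF assms(2) that] by simp
  qed
qed

lemma weak_grad_add:
  assumes "weak_grad D u1 g1" "weak_grad D u2 g2" "open D"
  shows "weak_grad D (\<lambda>x. u1 x + u2 x) (\<lambda>x. g1 x + g2 x)"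
  unfolding weak_grad_def
proof (intro conjI allI impI)
  show "(\<lambda>x. u1 x + u2 x) \<in> borel_measurable lborel" "(\<lambda>x. g1 x + g2 x) \<in> borel_measurable lborel"
    using assms unfolding weak_grad_def by auto
  fix K :: "'a set" assume "compact K \<and> K \<subseteq> D"
  then show "set_integrable lborel K (\<lambda>x. u1 x + u2 x)" "set_integrable lborel K (\<lambda>x. g1 x + g2 x)"
    using assms unfolding weak_grad_def by auto
next
  fix \<phi> assume tf: "test_fun D \<phi>"
  have e1: "(\<integral>x\<in>D. u1 x *\<^sub>R grad \<phi> x \<partial>lborel) = - (\<integral>x\<in>D. \<phi> x *\<^sub>R g1 x \<partial>lborel)"
    using assms(1) tf unfolding weak_grad_def by blast
  have e2: "(\<integral>x\<in>D. u2 x *\<^sub>R grad \<phi> x \<partial>lborel) = - (\<integral>x\<in>D. \<phi> x *\<^sub>R g2 x \<partial>lborel)"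
    using assms(2) tf unfolding weak_grad_def by blast
  have "(\<integral>x\<in>D. (u1 x + u2 x) *\<^sub>R grad \<phi> x \<partial>lborel)
      = (\<integral>x\<in>D. u1 x *\<^sub>R grad \<phi> x + u2 x *\<^sub>R grad \<phi> x \<partial>lborel)"
    by (simp add: scaleR_add_left)
  also have "\<dots> = (\<integral>x\<in>D. u1 x *\<^sub>R grad \<phi> x \<partial>lborel) + (\<integral>x\<in>D. u2 x *\<^sub>R grad \<phi> x \<partial>lborel)"
    by (rule set_integral_add(2)[OF tf_int1[OF assms(1) tf assms(3)] tf_int1[OF assms(2) tf assms(3)]])
  also have "\<dots> = - ((\<integral>x\<in>D. \<phi> x *\<^sub>R g1 x \<partial>lborel) + (\<integral>x\<in>D. \<phi> x *\<^sub>R g2 x \<partial>lborel))"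
    using e1 e2 by simp
  also have "(\<integral>x\<in>D. \<phi> x *\<^sub>R g1 x \<partial>lborel) + (\<integral>x\<in>D. \<phi> x *\<^sub>R g2 x \<partial>lborel)
      = (\<integral>x\<in>D. \<phi> x *\<^sub>R g1 x + \<phi> x *\<^sub>R g2 x \<partial>lborel)"
    by (rule set_integral_add(2)[OF tf_int2[OF assms(1) tf assms(3)] tf_int2[OF assms(2) tf assms(3)], symmetric])
  finally show "(\<integral>x\<in>D. (u1 x + u2 x) *\<^sub>R grad \<phi> x \<partial>lborel) = - (\<integral>x\<in>D. \<phi> x *\<^sub>R (g1 x + g2 x) \<partial>lborel)"
    by (simp add: scaleR_add_right)
qed

lemma weak_grad_scale:
  assumes "weak_grad D u g"
  shows "weak_grad D (\<lambda>x. c * u x) (\<lambda>x. c *\<^sub>R g x)"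
  unfolding weak_grad_def
proof (intro conjI allI impI)
  show "(\<lambda>x. c * u x) \<in> borel_measurable lborel" "(\<lambda>x. c *\<^sub>R g x) \<in> borel_measurable lborel"
    using assms unfolding weak_grad_def by auto
  fix K :: "'a set" assume "compact K \<and> K \<subseteq> D"
  then have "set_integrable lborel K u" "set_integrable lborel K g"
    using assms unfolding weak_grad_def by auto
  then show "set_integrable lborel K (\<lambda>x. c * u x)" "set_integrable lborel K (\<lambda>x. c *\<^sub>R g x)"
    using set_integrable_scaleR_right[of c lborel K u] by auto
next
  fix \<phi> assume tf: "test_fun D \<phi>"
  have e1: "(\<integral>x\<in>D. u x *\<^sub>R grad \<phi> x \<partial>lborel) = - (\<integral>x\<in>D. \<phi> x *\<^sub>R g x \<partial>lborel)"
    using assms(1) tf unfolding weak_grad_def by blast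
  have "(\<integral>x\<in>D. (c * u x) *\<^sub>R grad \<phi> x \<partial>lborel) = c *\<^sub>R (\<integral>x\<in>D. u x *\<^sub>R grad \<phi> x \<partial>lborel)"
    unfolding set_lebesgue_integral_def
    by (simp add: integral_scaleR_right[symmetric] scaleR_left_commute mult_ac)
  moreover have "(\<integral>x\<in>D. \<phi> x *\<^sub>R (c *\<^sub>R g x) \<partial>lborel) = c *\<^sub>R (\<integral>x\<in>D. \<phi> x *\<^sub>R g x \<partial>lborel)"
    unfolding set_lebesgue_integral_def
    by (simp add: integral_scaleR_right[symmetric] scaleR_left_commute mult_ac)
  ultimately show "(\<integral>x\<in>D. (c * u x) *\<^sub>R grad \<phi> x \<partial>lborel) = - (\<integral>x\<in>D. \<phi> x *\<^sub>R (c *\<^sub>R g x) \<partial>lborel)"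
    using e1 by simp
qed


lemma sq_add_le: "(a + b)\<^sup>2 \<le> 2 * a\<^sup>2 + 2 * (b::real)\<^sup>2"
  using zero_le_power2[of "a - b"] unfolding power2_diff power2_sum by linarith

lemma nn_sq_add:
  fixes f1 f2 :: "'a::euclidean_space \<Rightarrow> 'c::euclidean_space"
  assumes [measurable]: "f1 \<in> borel_measurable lborel" "f2 \<in> borel_measurable lborel" "D \<in> sets lborel"
  shows "(\<integral>\<^sup>+x\<in>D. ennreal ((norm (f1 x + f2 x))\<^sup>2) \<partial>lborel)
     \<le> 2 * (\<integral>\<^sup>+x\<in>D. ennreal ((norm (f1 x))\<^sup>2) \<partial>lborel) + 2 * (\<integral>\<^sup>+x\<in>D. ennreal ((norm (f2 x))\<^sup>2) \<partial>lborel)"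
proof -
  have pt: "ennreal ((norm (f1 x + f2 x))\<^sup>2) * indicator D x
      \<le> 2 * (ennreal ((norm (f1 x))\<^sup>2) * indicator D x) + 2 * (ennreal ((norm (f2 x))\<^sup>2) * indicator D x)" for x
  proof -
    have "(norm (f1 x + f2 x))\<^sup>2 \<le> (norm (f1 x) + norm (f2 x))\<^sup>2"
      by (intro power_mono norm_triangle_ineq) auto
    also have "\<dots> \<le> 2 * (norm (f1 x))\<^sup>2 + 2 * (norm (f2 x))\<^sup>2" by (rule sq_add_le)
    finally have "ennreal ((norm (f1 x + f2 x))\<^sup>2) \<le> ennreal (2 * (norm (f1 x))\<^sup>2 + 2 * (norm (f2 x))\<^sup>2)"
      by (rule ennreal_leI)
    also have "\<dots> = 2 * ennreal ((norm (f1 x))\<^sup>2) + 2 * ennreal ((norm (f2 x))\<^sup>2)"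
      by (subst ennreal_plus) (auto simp: ennreal_mult')
    finally show ?thesis by (cases "x \<in> D") auto
  qed
  have "(\<integral>\<^sup>+x\<in>D. ennreal ((norm (f1 x + f2 x))\<^sup>2) \<partial>lborel)
     \<le> (\<integral>\<^sup>+x. 2 * (ennreal ((norm (f1 x))\<^sup>2) * indicator D x) + 2 * (ennreal ((norm (f2 x))\<^sup>2) * indicator D x) \<partial>lborel)"
    by (intro nn_integral_mono pt)
  also have "\<dots> = 2 * (\<integral>\<^sup>+x\<in>D. ennreal ((norm (f1 x))\<^sup>2) \<partial>lborel) + 2 * (\<integral>\<^sup>+x\<in>D. ennreal ((norm (f2 x))\<^sup>2) \<partial>lborel)"
    by (simp add: nn_integral_add nn_integral_cmult)
  finally show ?thesis .
qed

lemma nn_sq_add_real: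
  fixes f1 f2 :: "'a::euclidean_space \<Rightarrow> real"
  assumes "f1 \<in> borel_measurable lborel" "f2 \<in> borel_measurable lborel" "D \<in> sets lborel"
  shows "(\<integral>\<^sup>+x\<in>D. ennreal ((f1 x + f2 x)\<^sup>2) \<partial>lborel)
     \<le> 2 * (\<integral>\<^sup>+x\<in>D. ennreal ((f1 x)\<^sup>2) \<partial>lborel) + 2 * (\<integral>\<^sup>+x\<in>D. ennreal ((f2 x)\<^sup>2) \<partial>lborel)"
  using nn_sq_add[OF assms] by (simp only: real_norm_def power2_abs)

lemma nn_scale:
  fixes h :: "'a::euclidean_space \<Rightarrow> real"
  assumes [measurable]: "h \<in> borel_measurable lborel" "D \<in> sets lborel"
  shows "(\<integral>\<^sup>+x\<in>D. ennreal (c\<^sup>2 * h x) \<partial>lborel) = ennreal (c\<^sup>2) * (\<integral>\<^sup>+x\<in>D. ennreal (h x) \<partial>lborel)"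
proof -
  have "(\<integral>\<^sup>+x\<in>D. ennreal (c\<^sup>2 * h x) \<partial>lborel) = (\<integral>\<^sup>+x. ennreal (c\<^sup>2) * (ennreal (h x) * indicator D x) \<partial>lborel)"
    by (simp add: ennreal_mult' mult.assoc)
  also have "\<dots> = ennreal (c\<^sup>2) * (\<integral>\<^sup>+x\<in>D. ennreal (h x) \<partial>lborel)"
    by (rule nn_integral_cmult) measurable
  finally show ?thesis .
qed

lemma tf_meas: "test_fun D \<phi> \<Longrightarrow> \<phi> \<in> borel_measurable lborel"
  using borel_measurable_continuous_onI[OF smooth_cont] by (auto simp: test_fun_def)

lemma tf_grad_meas: "test_fun D \<phi> \<Longrightarrow> grad \<phi> \<in> borel_measurable lborel"
  using borel_measurable_continuous_onI[OF grad_cont] by (auto simp: test_fun_def)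

lemma tendsto_0_sandwich_ennreal:
  fixes X Y :: "nat \<Rightarrow> ennreal"
  assumes "\<And>n. X n \<le> Y n" "Y \<longlonglongrightarrow> 0"
  shows "X \<longlonglongrightarrow> 0"
  by (rule tendsto_sandwich[of "\<lambda>_. 0" X sequentially Y]) (use assms in auto)

lemma H10g_zero: "H10g D (\<lambda>x. 0) (\<lambda>x. 0)"
  unfolding H10g_def weak_grad_def
  by (auto intro!: exI[of _ "\<lambda>n x. 0"] simp: test_fun_zero grad_def set_integrable_def)

lemma H10g_scale:
  assumes "H10g D u g" "open D"
  shows "H10g D (\<lambda>x. c * u x) (\<lambda>x. c *\<^sub>R g x)"
proof -
  have Dm: "D \<in> sets lborel" using assms(2) by simp
  from assms(1) obtain \<phi> where wg: "weak_grad D u g"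
    and fu: "(\<integral>\<^sup>+x\<in>D. ennreal ((u x)\<^sup>2) \<partial>lborel) < \<infinity>"
    and fg: "(\<integral>\<^sup>+x\<in>D. ennreal ((norm (g x))\<^sup>2) \<partial>lborel) < \<infinity>"
    and tf: "\<And>n. test_fun D (\<phi> n)"
    and c1: "(\<lambda>n. \<integral>\<^sup>+x\<in>D. ennreal ((\<phi> n x - u x)\<^sup>2) \<partial>lborel) \<longlonglongrightarrow> 0"
    and c2: "(\<lambda>n. \<integral>\<^sup>+x\<in>D. ennreal ((norm (grad (\<phi> n) x - g x))\<^sup>2) \<partial>lborel) \<longlonglongrightarrow> 0"
    unfolding H10g_def by blast
  have um: "u \<in> borel_measurable lborel" and gm: "g \<in> borel_measurable lborel"
    using wg unfolding weak_grad_def by auto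
  have sm: "smooth_fun (\<phi> n)" for n using tf by (simp add: test_fun_def)
  have e1: "(\<integral>\<^sup>+x\<in>D. ennreal ((c * u x)\<^sup>2) \<partial>lborel) = ennreal (c\<^sup>2) * (\<integral>\<^sup>+x\<in>D. ennreal ((u x)\<^sup>2) \<partial>lborel)"
    using nn_scale[of "\<lambda>x. (u x)\<^sup>2" D c] um Dm by (simp add: power_mult_distrib)
  have e2: "(\<integral>\<^sup>+x\<in>D. ennreal ((norm (c *\<^sub>R g x))\<^sup>2) \<partial>lborel) = ennreal (c\<^sup>2) * (\<integral>\<^sup>+x\<in>D. ennreal ((norm (g x))\<^sup>2) \<partial>lborel)"
    using nn_scale[of "\<lambda>x. (norm (g x))\<^sup>2" D c] gm Dm by (simp add: power_mult_distrib)
  have e3: "(\<integral>\<^sup>+x\<in>D. ennreal ((c * \<phi> n x - c * u x)\<^sup>2) \<partial>lborel) = ennreal (c\<^sup>2) * (\<integral>\<^sup>+x\<in>D. ennreal ((\<phi> n x - u x)\<^sup>2) \<partial>lborel)" for n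
    using nn_scale[of "\<lambda>x. (\<phi> n x - u x)\<^sup>2" D c] um Dm tf_meas[OF tf]
    by (simp add: power_mult_distrib right_diff_distrib[symmetric])
  have e4: "(\<integral>\<^sup>+x\<in>D. ennreal ((norm (grad (\<lambda>x. c * \<phi> n x) x - c *\<^sub>R g x))\<^sup>2) \<partial>lborel) = ennreal (c\<^sup>2) * (\<integral>\<^sup>+x\<in>D. ennreal ((norm (grad (\<phi> n) x - g x))\<^sup>2) \<partial>lborel)" for n
    using nn_scale[of "\<lambda>x. (norm (grad (\<phi> n) x - g x))\<^sup>2" D c] gm Dm tf_grad_meas[OF tf]
    by (simp add: grad_scale[OF sm] power_mult_distrib scaleR_diff_right[symmetric])
  show ?thesis
    unfolding H10g_def
  proof (intro conjI exI[of _ "\<lambda>n x. c * \<phi> n x"])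
    show "weak_grad D (\<lambda>x. c * u x) (\<lambda>x. c *\<^sub>R g x)" by (rule weak_grad_scale[OF wg])
    show "(\<integral>\<^sup>+x\<in>D. ennreal ((c * u x)\<^sup>2) \<partial>lborel) < \<infinity>"
      using fu unfolding e1 by (simp add: ennreal_mult_less_top)
    show "(\<integral>\<^sup>+x\<in>D. ennreal ((norm (c *\<^sub>R g x))\<^sup>2) \<partial>lborel) < \<infinity>"
      using fg unfolding e2 by (simp add: ennreal_mult_less_top)
    show "\<forall>n. test_fun D (\<lambda>x. c * \<phi> n x)" using tf test_fun_scale by blast
    show "(\<lambda>n. \<integral>\<^sup>+x\<in>D. ennreal ((c * \<phi> n x - c * u x)\<^sup>2) \<partial>lborel) \<longlonglongrightarrow> 0"
      unfolding e3 using ennreal_tendsto_cmult[OF _ c1, of "ennreal (c\<^sup>2)"] by simp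
    show "(\<lambda>n. \<integral>\<^sup>+x\<in>D. ennreal ((norm (grad (\<lambda>x. c * \<phi> n x) x - c *\<^sub>R g x))\<^sup>2) \<partial>lborel) \<longlonglongrightarrow> 0"
      unfolding e4 using ennreal_tendsto_cmult[OF _ c2, of "ennreal (c\<^sup>2)"] by simp
  qed
qed


lemma H10g_add:
  assumes "H10g D u1 g1" "H10g D u2 g2" "open D"
  shows "H10g D (\<lambda>x. u1 x + u2 x) (\<lambda>x. g1 x + g2 x)"
proof -
  have Dm: "D \<in> sets lborel" using assms(3) by simp
  from assms(1) obtain \<phi>1 where wg1: "weak_grad D u1 g1"
    and fu1: "(\<integral>\<^sup>+x\<in>D. ennreal ((u1 x)\<^sup>2) \<partial>lborel) < \<infinity>"
    and fg1: "(\<integral>\<^sup>+x\<in>D. ennreal ((norm (g1 x))\<^sup>2) \<partial>lborel) < \<infinity>"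
    and tf1: "\<And>n. test_fun D (\<phi>1 n)"
    and c11: "(\<lambda>n. \<integral>\<^sup>+x\<in>D. ennreal ((\<phi>1 n x - u1 x)\<^sup>2) \<partial>lborel) \<longlonglongrightarrow> 0"
    and c12: "(\<lambda>n. \<integral>\<^sup>+x\<in>D. ennreal ((norm (grad (\<phi>1 n) x - g1 x))\<^sup>2) \<partial>lborel) \<longlonglongrightarrow> 0"
    unfolding H10g_def by blast
  from assms(2) obtain \<phi>2 where wg2: "weak_grad D u2 g2"
    and fu2: "(\<integral>\<^sup>+x\<in>D. ennreal ((u2 x)\<^sup>2) \<partial>lborel) < \<infinity>"
    and fg2: "(\<integral>\<^sup>+x\<in>D. ennreal ((norm (g2 x))\<^sup>2) \<partial>lborel) < \<infinity>"
    and tf2: "\<And>n. test_fun D (\<phi>2 n)"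
    and c21: "(\<lambda>n. \<integral>\<^sup>+x\<in>D. ennreal ((\<phi>2 n x - u2 x)\<^sup>2) \<partial>lborel) \<longlonglongrightarrow> 0"
    and c22: "(\<lambda>n. \<integral>\<^sup>+x\<in>D. ennreal ((norm (grad (\<phi>2 n) x - g2 x))\<^sup>2) \<partial>lborel) \<longlonglongrightarrow> 0"
    unfolding H10g_def by blast
  have um1: "u1 \<in> borel_measurable lborel" and gm1: "g1 \<in> borel_measurable lborel"
    using wg1 unfolding weak_grad_def by auto
  have um2: "u2 \<in> borel_measurable lborel" and gm2: "g2 \<in> borel_measurable lborel"
    using wg2 unfolding weak_grad_def by auto
  have sm1: "smooth_fun (\<phi>1 n)" for n using tf1 by (simp add: test_fun_def)
  have sm2: "smooth_fun (\<phi>2 n)" for n using tf2 by (simp add: test_fun_def)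
  have two: "(2::ennreal) < \<top>" by simp
  show ?thesis
    unfolding H10g_def
  proof (intro conjI exI[of _ "\<lambda>n x. \<phi>1 n x + \<phi>2 n x"])
    show "weak_grad D (\<lambda>x. u1 x + u2 x) (\<lambda>x. g1 x + g2 x)" by (rule weak_grad_add[OF wg1 wg2 assms(3)])
    show "(\<integral>\<^sup>+x\<in>D. ennreal ((u1 x + u2 x)\<^sup>2) \<partial>lborel) < \<infinity>"
      using nn_sq_add_real[OF um1 um2 Dm] fu1 fu2
      by (simp add: ennreal_mult_less_top order.strict_trans1)
    show "(\<integral>\<^sup>+x\<in>D. ennreal ((norm (g1 x + g2 x))\<^sup>2) \<partial>lborel) < \<infinity>"
      using nn_sq_add[OF gm1 gm2 Dm] fg1 fg2
      by (simp add: ennreal_mult_less_top order.strict_trans1)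
    show "\<forall>n. test_fun D (\<lambda>x. \<phi>1 n x + \<phi>2 n x)" using tf1 tf2 test_fun_add by blast
    show "(\<lambda>n. \<integral>\<^sup>+x\<in>D. ennreal ((\<phi>1 n x + \<phi>2 n x - (u1 x + u2 x))\<^sup>2) \<partial>lborel) \<longlonglongrightarrow> 0"
    proof (rule tendsto_0_sandwich_ennreal)
      fix n
      have eq: "(\<integral>\<^sup>+x\<in>D. ennreal ((\<phi>1 n x + \<phi>2 n x - (u1 x + u2 x))\<^sup>2) \<partial>lborel) = (\<integral>\<^sup>+x\<in>D. ennreal (((\<phi>1 n x - u1 x) + (\<phi>2 n x - u2 x))\<^sup>2) \<partial>lborel)"
        by (rule nn_integral_cong) (simp add: algebra_simps)
      show "(\<integral>\<^sup>+x\<in>D. ennreal ((\<phi>1 n x + \<phi>2 n x - (u1 x + u2 x))\<^sup>2) \<partial>lborel)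
          \<le> 2 * (\<integral>\<^sup>+x\<in>D. ennreal ((\<phi>1 n x - u1 x)\<^sup>2) \<partial>lborel) + 2 * (\<integral>\<^sup>+x\<in>D. ennreal ((\<phi>2 n x - u2 x)\<^sup>2) \<partial>lborel)"
        unfolding eq
        by (rule nn_sq_add_real[OF _ _ Dm]) (use tf_meas[OF tf1] tf_meas[OF tf2] um1 um2 in auto)
    next
      show "(\<lambda>n. 2 * (\<integral>\<^sup>+x\<in>D. ennreal ((\<phi>1 n x - u1 x)\<^sup>2) \<partial>lborel) + 2 * (\<integral>\<^sup>+x\<in>D. ennreal ((\<phi>2 n x - u2 x)\<^sup>2) \<partial>lborel)) \<longlonglongrightarrow> 0"
        using tendsto_add[OF ennreal_tendsto_cmult[OF two c11] ennreal_tendsto_cmult[OF two c21]] by simp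
    qed
    show "(\<lambda>n. \<integral>\<^sup>+x\<in>D. ennreal ((norm (grad (\<lambda>x. \<phi>1 n x + \<phi>2 n x) x - (g1 x + g2 x)))\<^sup>2) \<partial>lborel) \<longlonglongrightarrow> 0"
    proof (rule tendsto_0_sandwich_ennreal)
      fix n
      have eq: "(\<integral>\<^sup>+x\<in>D. ennreal ((norm (grad (\<lambda>x. \<phi>1 n x + \<phi>2 n x) x - (g1 x + g2 x)))\<^sup>2) \<partial>lborel)
         = (\<integral>\<^sup>+x\<in>D. ennreal ((norm ((grad (\<phi>1 n) x - g1 x) + (grad (\<phi>2 n) x - g2 x)))\<^sup>2) \<partial>lborel)"
        by (rule nn_integral_cong) (simp add: grad_add[OF sm1 sm2] algebra_simps)
      show "(\<integral>\<^sup>+x\<in>D. ennreal ((norm (grad (\<lambda>x. \<phi>1 n x + \<phi>2 n x) x - (g1 x + g2 x)))\<^sup>2) \<partial>lborel)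
          \<le> 2 * (\<integral>\<^sup>+x\<in>D. ennreal ((norm (grad (\<phi>1 n) x - g1 x))\<^sup>2) \<partial>lborel) + 2 * (\<integral>\<^sup>+x\<in>D. ennreal ((norm (grad (\<phi>2 n) x - g2 x))\<^sup>2) \<partial>lborel)"
        unfolding eq
        by (rule nn_sq_add[OF _ _ Dm]) (use tf_grad_meas[OF tf1] tf_grad_meas[OF tf2] gm1 gm2 in auto)
    next
      show "(\<lambda>n. 2 * (\<integral>\<^sup>+x\<in>D. ennreal ((norm (grad (\<phi>1 n) x - g1 x))\<^sup>2) \<partial>lborel) + 2 * (\<integral>\<^sup>+x\<in>D. ennreal ((norm (grad (\<phi>2 n) x - g2 x))\<^sup>2) \<partial>lborel)) \<longlonglongrightarrow> 0"
        using tendsto_add[OF ennreal_tendsto_cmult[OF two c12] ennreal_tendsto_cmult[OF two c22]] by simp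
    qed
  qed
qed

lemma H10g_sum:
  fixes n :: nat
  assumes "\<And>i. i < n \<Longrightarrow> H10g D (v i) (g i)" "open D"
  shows "H10g D (\<lambda>x. \<Sum>i<n. a i * v i x) (\<lambda>x. \<Sum>i<n. a i *\<^sub>R g i x)"
  using assms(1)
proof (induction n)
  case 0 then show ?case using H10g_zero by simp
next
  case (Suc n)
  have "H10g D (\<lambda>x. (\<Sum>i<n. a i * v i x) + a n * v n x) (\<lambda>x. (\<Sum>i<n. a i *\<^sub>R g i x) + a n *\<^sub>R g n x)"
    using Suc by (intro H10g_add H10g_scale assms(2)) auto
  then show ?case by simp
qed


lemma norm_sum_sq:
  fixes z :: "nat \<Rightarrow> 'c::real_normed_vector"
  shows "(norm (\<Sum>i<n. a i *\<^sub>R z i))\<^sup>2 \<le> real n * (\<Sum>i<n. (a i)\<^sup>2 * (norm (z i))\<^sup>2)"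
proof -
  have "norm (\<Sum>i<n. a i *\<^sub>R z i) \<le> (\<Sum>i<n. \<bar>a i\<bar> * norm (z i))"
    by (rule order.trans[OF norm_sum]) simp
  then have "(norm (\<Sum>i<n. a i *\<^sub>R z i))\<^sup>2 \<le> (\<Sum>i<n. \<bar>a i\<bar> * norm (z i))\<^sup>2"
    by (intro power_mono) auto
  also have "\<dots> = (\<Sum>i<n. (\<bar>a i\<bar> * norm (z i)) * 1)\<^sup>2" by simp
  also have "\<dots> \<le> (\<Sum>i<n. (\<bar>a i\<bar> * norm (z i))\<^sup>2) * (\<Sum>i<n. 1\<^sup>2)"
    by (rule Cauchy_Schwarz_ineq_sum)
  also have "\<dots> = real n * (\<Sum>i<n. (a i)\<^sup>2 * (norm (z i))\<^sup>2)"
    by (simp add: power_mult_distrib)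
  finally show ?thesis .
qed

lemma tensor_Xgamma:
  fixes D :: "'a::euclidean_space set"
    and \<Gamma> :: "'b::euclidean_space measure"
  assumes "open D"
    and gpos: "\<And>y. \<gamma> y > 0" and gm: "\<gamma> \<in> borel_measurable \<Gamma>"
    and V: "\<And>v. v \<in> V \<Longrightarrow> H10 D v"
    and Wm: "\<And>w. w \<in> W \<Longrightarrow> w \<in> borel_measurable \<Gamma>"
    and Wf: "\<And>w. w \<in> W \<Longrightarrow> (\<integral>\<^sup>+y. ennreal (\<gamma> y * (w y)\<^sup>2) \<partial>\<Gamma>) < \<infinity>"
  shows "tensor_space V W \<subseteq> Xgamma D \<Gamma> \<gamma>"
proof
  fix f assume "f \<in> tensor_space V W"
  then obtain n :: nat and c v w where vw0: "\<forall>i<n. v i \<in> V \<and> w i \<in> W"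
    and f: "f = (\<lambda>(x,y). \<Sum>i<n. c i * v i x * w i y)"
    unfolding tensor_space_def by blast
  have vw: "\<And>i. i < n \<Longrightarrow> v i \<in> V \<and> w i \<in> W" using vw0 by blast
  have Dm: "D \<in> sets lborel" using assms(1) by simp
  define g where "g i = (SOME g. H10g D (v i) g)" for i
  have Hg: "H10g D (v i) (g i)" if "i < n" for i
    unfolding g_def using V[of "v i"] vw[OF that] H10_iff[of D "v i"] by (metis someI_ex)
  have gmeas: "g i \<in> borel_measurable lborel" if "i < n" for i
    using Hg[OF that] unfolding H10g_def weak_grad_def by auto
  have wmeas: "w i \<in> borel_measurable \<Gamma>" if "i < n" for i
    using Wm vw[OF that] by auto
  have gsq: "(\<lambda>x. ennreal ((norm (g i x))\<^sup>2) * indicator D x) \<in> borel_measurable borel"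
     "(\<lambda>x. a * (ennreal ((norm (g i x))\<^sup>2) * indicator D x)) \<in> borel_measurable borel"
    if "i < n" for i and a :: ennreal
  proof -
    have [measurable]: "g i \<in> borel_measurable borel" using gmeas[OF that] by simp
    have [measurable]: "D \<in> sets borel" using assms(1) by simp
    show "(\<lambda>x. ennreal ((norm (g i x))\<^sup>2) * indicator D x) \<in> borel_measurable borel" by measurable
    show "(\<lambda>x. a * (ennreal ((norm (g i x))\<^sup>2) * indicator D x)) \<in> borel_measurable borel" by measurable
  qed
  define A where "A i = (\<integral>\<^sup>+x\<in>D. ennreal ((norm (g i x))\<^sup>2) \<partial>lborel)" for i
  have Afin: "A i < \<infinity>" if "i < n" for i
    using Hg[OF that] unfolding H10g_def A_def by auto
  define B where "B i = (\<integral>\<^sup>+y. ennreal (\<gamma> y * (w i y)\<^sup>2) \<partial>\<Gamma>)" for i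
  have Bfin: "B i < \<infinity>" if "i < n" for i
    using Wf vw[OF that] unfolding B_def by auto
  define G where "G = (\<lambda>p. \<Sum>i<n. (c i * w i (snd p)) *\<^sub>R g i (fst p))"
  have Gxy: "G (x, y) = (\<Sum>i<n. (c i * w i y) *\<^sub>R g i x)" for x y by (simp add: G_def)
  show "f \<in> Xgamma D \<Gamma> \<gamma>"
    unfolding Xgamma_def
  proof (intro CollectI exI[of _ G] conjI)
    show "G \<in> borel_measurable (lborel \<Otimes>\<^sub>M \<Gamma>)"
      unfolding G_def
    proof (rule borel_measurable_sum)
      fix i assume "i \<in> {..<n}"
      then have i: "i < n" by simp
      show "(\<lambda>p. (c i * w i (snd p)) *\<^sub>R g i (fst p)) \<in> borel_measurable (lborel \<Otimes>\<^sub>M \<Gamma>)"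
        by (intro borel_measurable_scaleR borel_measurable_times borel_measurable_const
            measurable_compose[OF measurable_snd wmeas[OF i]] measurable_compose[OF measurable_fst gmeas[OF i]])
    qed
    show "AE y in \<Gamma>. H10 D (\<lambda>x. f (x, y)) \<and> weak_grad D (\<lambda>x. f (x, y)) (\<lambda>x. G (x, y))"
    proof (rule AE_I2)
      fix y
      have H: "H10g D (\<lambda>x. \<Sum>i<n. (c i * w i y) * v i x) (\<lambda>x. \<Sum>i<n. (c i * w i y) *\<^sub>R g i x)"
        using H10g_sum[where a="\<lambda>i. c i * w i y", OF Hg assms(1)] by simp
      have fe: "(\<lambda>x. f (x, y)) = (\<lambda>x. \<Sum>i<n. (c i * w i y) * v i x)"
        by (simp add: f mult_ac)
      have Ge: "(\<lambda>x. G (x, y)) = (\<lambda>x. \<Sum>i<n. (c i * w i y) *\<^sub>R g i x)"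
        by (simp add: Gxy)
      show "H10 D (\<lambda>x. f (x, y)) \<and> weak_grad D (\<lambda>x. f (x, y)) (\<lambda>x. G (x, y))"
        unfolding fe Ge H10_iff using H unfolding H10g_def by blast
    qed
    define K where "K i = ennreal (real n * (c i)\<^sup>2)" for i
    have inner: "ennreal (\<gamma> y) * (\<integral>\<^sup>+x\<in>D. ennreal ((norm (G (x, y)))\<^sup>2) \<partial>lborel)
        \<le> (\<Sum>i<n. K i * (ennreal (\<gamma> y * (w i y)\<^sup>2) * A i))" for y
    proof -
      have "(\<integral>\<^sup>+x\<in>D. ennreal ((norm (G (x, y)))\<^sup>2) \<partial>lborel)
          \<le> (\<integral>\<^sup>+x. (\<Sum>i<n. ennreal (real n * (c i * w i y)\<^sup>2) * (ennreal ((norm (g i x))\<^sup>2) * indicator D x)) \<partial>lborel)"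
      proof (rule nn_integral_mono)
        fix x
        have "(norm (G (x, y)))\<^sup>2 \<le> real n * (\<Sum>i<n. (c i * w i y)\<^sup>2 * (norm (g i x))\<^sup>2)"
          unfolding Gxy by (rule norm_sum_sq)
        also have "\<dots> = (\<Sum>i<n. (real n * (c i * w i y)\<^sup>2) * (norm (g i x))\<^sup>2)"
          by (simp add: sum_distrib_left mult_ac)
        finally have "ennreal ((norm (G (x, y)))\<^sup>2) \<le> ennreal (\<Sum>i<n. (real n * (c i * w i y)\<^sup>2) * (norm (g i x))\<^sup>2)"
          by (rule ennreal_leI)
        also have "\<dots> = (\<Sum>i<n. ennreal (real n * (c i * w i y)\<^sup>2) * ennreal ((norm (g i x))\<^sup>2))"
          by (subst sum_ennreal[symmetric]) (auto simp: ennreal_mult)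
        finally show "ennreal ((norm (G (x, y)))\<^sup>2) * indicator D x
            \<le> (\<Sum>i<n. ennreal (real n * (c i * w i y)\<^sup>2) * (ennreal ((norm (g i x))\<^sup>2) * indicator D x))"
          by (cases "x \<in> D") auto
      qed
      also have "\<dots> = (\<Sum>i<n. ennreal (real n * (c i * w i y)\<^sup>2) * A i)"
        unfolding A_def
        by (subst nn_integral_sum) (auto intro!: sum.cong nn_integral_cmult gsq)
      finally have "ennreal (\<gamma> y) * (\<integral>\<^sup>+x\<in>D. ennreal ((norm (G (x, y)))\<^sup>2) \<partial>lborel)
          \<le> ennreal (\<gamma> y) * (\<Sum>i<n. ennreal (real n * (c i * w i y)\<^sup>2) * A i)"
        by (rule mult_left_mono) simp
      also have "\<dots> = (\<Sum>i<n. K i * (ennreal (\<gamma> y * (w i y)\<^sup>2) * A i))"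
      proof -
        have "ennreal (\<gamma> y) * (ennreal (real n * (c i * w i y)\<^sup>2) * A i) = K i * (ennreal (\<gamma> y * (w i y)\<^sup>2) * A i)" for i
        proof -
          have "ennreal (\<gamma> y) * ennreal (real n * (c i * w i y)\<^sup>2) = ennreal (real n * (c i)\<^sup>2) * ennreal (\<gamma> y * (w i y)\<^sup>2)"
            using less_imp_le[OF gpos[of y]]
            by (simp add: ennreal_mult[symmetric] power_mult_distrib mult_ac)
          then show ?thesis unfolding K_def by (simp add: mult.assoc[symmetric])
        qed
        then show ?thesis by (simp add: sum_distrib_left)
      qed
      finally show ?thesis .
    qed
    have wsq: "(\<lambda>y. ennreal (\<gamma> y * (w i y)\<^sup>2)) \<in> borel_measurable \<Gamma>"
      "(\<lambda>y. ennreal (\<gamma> y * (w i y)\<^sup>2) * b) \<in> borel_measurable \<Gamma>"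
      "(\<lambda>y. a * (ennreal (\<gamma> y * (w i y)\<^sup>2) * b)) \<in> borel_measurable \<Gamma>"
      if "i < n" for i and a b :: ennreal
    proof -
      have [measurable]: "w i \<in> borel_measurable \<Gamma>" using wmeas[OF that] .
      have [measurable]: "\<gamma> \<in> borel_measurable \<Gamma>" using gm .
      show "(\<lambda>y. ennreal (\<gamma> y * (w i y)\<^sup>2)) \<in> borel_measurable \<Gamma>" by measurable
      show "(\<lambda>y. ennreal (\<gamma> y * (w i y)\<^sup>2) * b) \<in> borel_measurable \<Gamma>" by measurable
      show "(\<lambda>y. a * (ennreal (\<gamma> y * (w i y)\<^sup>2) * b)) \<in> borel_measurable \<Gamma>" by measurable
    qed
    have oeq: "(\<integral>\<^sup>+y. K i * (ennreal (\<gamma> y * (w i y)\<^sup>2) * A i) \<partial>\<Gamma>) = K i * (B i * A i)" if "i < n" for i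
      unfolding B_def by (simp add: nn_integral_cmult[OF wsq(2)[OF that]] nn_integral_multc[OF wsq(1)[OF that]])
    have "(\<integral>\<^sup>+y. ennreal (\<gamma> y) * (\<integral>\<^sup>+x\<in>D. ennreal ((norm (G (x, y)))\<^sup>2) \<partial>lborel) \<partial>\<Gamma>)
        \<le> (\<integral>\<^sup>+y. (\<Sum>i<n. K i * (ennreal (\<gamma> y * (w i y)\<^sup>2) * A i)) \<partial>\<Gamma>)"
      by (intro nn_integral_mono inner)
    also have "\<dots> = (\<Sum>i<n. K i * (B i * A i))"
      by (subst nn_integral_sum) (auto intro!: sum.cong oeq wsq(3))
    also have "\<dots> < \<infinity>"
      using Afin Bfin by (auto simp: K_def ennreal_mult_less_top)
    finally show "(\<integral>\<^sup>+y. ennreal (\<gamma> y) * (\<integral>\<^sup>+x\<in>D. ennreal ((norm (G (x, y)))\<^sup>2) \<partial>lborel) \<partial>\<Gamma>) < \<infinity>" .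
  qed
qed


lemma young_case:
  fixes \<Gamma> :: "'b measure"
  assumes gpos: "\<And>y. \<gamma> y > 0" and gm: "\<gamma> \<in> borel_measurable \<Gamma>"
    and r: "r \<ge> 1" and s: "s \<ge> 2" and rs: "2 / s + 1 / r = 1"
    and gL: "\<gamma> \<in> Lp_Gamma \<Gamma> r" and wL: "w \<in> Lp_Gamma \<Gamma> s"
  shows "(\<integral>\<^sup>+y. ennreal (\<gamma> y * (w y)\<^sup>2) \<partial>\<Gamma>) < \<infinity>"
proof -
  have r1: "r > 1"
  proof (rule ccontr)
    assume "\<not> r > 1" then have "r = 1" using r by auto
    then show False using rs s by auto
  qed
  have s2: "s > 2"
  proof (rule ccontr)
    assume "\<not> s > 2" then have "s = 2" using s by auto
    then show False using rs r by auto
  qed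
  define q where "q = s / 2"
  have q1: "q > 1" using s2 by (simp add: q_def)
  have rq: "1 / r + 1 / q = 1" using rs by (simp add: q_def)
  have wm: "w \<in> borel_measurable \<Gamma>" and wf: "(\<integral>\<^sup>+y. ennreal (\<bar>w y\<bar> powr s) \<partial>\<Gamma>) < \<infinity>"
    using wL by (auto simp: Lp_Gamma_def)
  have gf: "(\<integral>\<^sup>+y. ennreal (\<bar>\<gamma> y\<bar> powr r) \<partial>\<Gamma>) < \<infinity>"
    using gL by (auto simp: Lp_Gamma_def)
  have pt: "ennreal (\<gamma> y * (w y)\<^sup>2) \<le> ennreal (1 / r) * ennreal (\<bar>\<gamma> y\<bar> powr r) + ennreal (1 / q) * ennreal (\<bar>w y\<bar> powr s)" for y
  proof -
    have wq: "((w y)\<^sup>2) powr q = \<bar>w y\<bar> powr s"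
    proof (cases "w y = 0")
      case True then show ?thesis using q1 s2 by simp
    next
      case False
      have e: "(w y)\<^sup>2 = \<bar>w y\<bar> powr 2" using False by (simp add: powr_numeral)
      have "((w y)\<^sup>2) powr q = (\<bar>w y\<bar> powr 2) powr q" by (simp only: e)
      also have "\<dots> = \<bar>w y\<bar> powr (2 * q)" by (rule powr_powr)
      also have "\<dots> = \<bar>w y\<bar> powr s" by (simp add: q_def)
      finally show ?thesis .
    qed
    have "\<gamma> y * (w y)\<^sup>2 \<le> \<gamma> y powr r / r + ((w y)\<^sup>2) powr q / q"
      using Youngs_inequality[OF r1 q1 rq, of "\<gamma> y" "(w y)\<^sup>2"] less_imp_le[OF gpos[of y]] by simp
    also have "\<dots> = (1 / r) * \<bar>\<gamma> y\<bar> powr r + (1 / q) * \<bar>w y\<bar> powr s"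
      using gpos[of y] wq by simp
    finally have "ennreal (\<gamma> y * (w y)\<^sup>2) \<le> ennreal ((1 / r) * \<bar>\<gamma> y\<bar> powr r + (1 / q) * \<bar>w y\<bar> powr s)"
      by (rule ennreal_leI)
    also have "\<dots> = ennreal (1 / r) * ennreal (\<bar>\<gamma> y\<bar> powr r) + ennreal (1 / q) * ennreal (\<bar>w y\<bar> powr s)"
      using r1 q1 by (subst ennreal_plus) (auto simp: ennreal_mult'[symmetric])
    finally show ?thesis .
  qed
  have "(\<integral>\<^sup>+y. ennreal (\<gamma> y * (w y)\<^sup>2) \<partial>\<Gamma>)
      \<le> (\<integral>\<^sup>+y. ennreal (1 / r) * ennreal (\<bar>\<gamma> y\<bar> powr r) + ennreal (1 / q) * ennreal (\<bar>w y\<bar> powr s) \<partial>\<Gamma>)"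
    by (intro nn_integral_mono pt)
  also have "\<dots> = ennreal (1 / r) * (\<integral>\<^sup>+y. ennreal (\<bar>\<gamma> y\<bar> powr r) \<partial>\<Gamma>) + ennreal (1 / q) * (\<integral>\<^sup>+y. ennreal (\<bar>w y\<bar> powr s) \<partial>\<Gamma>)"
    using gm wm by (simp add: nn_integral_add nn_integral_cmult)
  also have "\<dots> < \<infinity>"
    using gf wf by (simp add: ennreal_mult_less_top)
  finally show ?thesis .
qed

lemma linf_case:
  fixes \<Gamma> :: "'b measure"
  assumes gpos: "\<And>y. \<gamma> y > 0" and gm: "\<gamma> \<in> borel_measurable \<Gamma>"
    and gL: "\<gamma> \<in> Lp_Gamma \<Gamma> 1" and wL: "w \<in> Linf_Gamma \<Gamma>"
  shows "(\<integral>\<^sup>+y. ennreal (\<gamma> y * (w y)\<^sup>2) \<partial>\<Gamma>) < \<infinity>"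
proof -
  obtain C where C: "AE y in \<Gamma>. \<bar>w y\<bar> \<le> C" using wL by (auto simp: Linf_Gamma_def)
  have gf: "(\<integral>\<^sup>+y. ennreal (\<gamma> y) \<partial>\<Gamma>) < \<infinity>"
  proof -
    have "(\<lambda>y. ennreal (\<bar>\<gamma> y\<bar> powr 1)) = (\<lambda>y. ennreal (\<gamma> y))"
      using gpos by (auto simp: fun_eq_iff less_imp_le)
    then show ?thesis using gL by (auto simp: Lp_Gamma_def)
  qed
  have "(\<integral>\<^sup>+y. ennreal (\<gamma> y * (w y)\<^sup>2) \<partial>\<Gamma>) \<le> (\<integral>\<^sup>+y. ennreal (C\<^sup>2) * ennreal (\<gamma> y) \<partial>\<Gamma>)"
  proof (rule nn_integral_mono_AE)
    show "AE y in \<Gamma>. ennreal (\<gamma> y * (w y)\<^sup>2) \<le> ennreal (C\<^sup>2) * ennreal (\<gamma> y)"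
      using C
    proof eventually_elim
      case (elim y)
      have "(w y)\<^sup>2 \<le> C\<^sup>2"
        using power_mono[OF elim abs_ge_zero, of 2] by simp
      then have "\<gamma> y * (w y)\<^sup>2 \<le> C\<^sup>2 * \<gamma> y"
        using less_imp_le[OF gpos[of y]] by (simp add: mult_left_mono mult.commute)
      then show ?case by (simp add: ennreal_mult'[symmetric] ennreal_leI)
    qed
  qed
  also have "\<dots> = ennreal (C\<^sup>2) * (\<integral>\<^sup>+y. ennreal (\<gamma> y) \<partial>\<Gamma>)"
    using gm by (simp add: nn_integral_cmult)
  also have "\<dots> < \<infinity>" using gf by (simp add: ennreal_mult_less_top)
  finally show ?thesis .
qed

theorem lemma10:
  fixes D :: "'a::euclidean_space set"
    and \<Gamma> :: "'b::euclidean_space measure"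
    and \<gamma> :: "'b \<Rightarrow> real"
    and V :: "('a \<Rightarrow> real) set"
    and W :: "('b \<Rightarrow> real) set"
  assumes "bounded D" and "open D"
    and "prob_space \<Gamma>" and "sets \<Gamma> = sets borel"
    and "\<And>y. \<gamma> y > 0" and "\<gamma> \<in> borel_measurable \<Gamma>"
    and "\<And>v. v \<in> V \<Longrightarrow> H10 D v"
    and "W \<subseteq> Lp_Gamma \<Gamma> 2"
  shows "(\<forall>r s::real. r \<ge> 1 \<and> s \<ge> 2 \<and> 2 / s + 1 / r = 1 \<and>
            \<gamma> \<in> Lp_Gamma \<Gamma> r \<and> W \<subseteq> Lp_Gamma \<Gamma> s
            \<longrightarrow> tensor_space V W \<subseteq> Xgamma D \<Gamma> \<gamma>)
       \<and> (\<gamma> \<in> Lp_Gamma \<Gamma> 1 \<and> W \<subseteq> Linf_Gamma \<Gamma>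
            \<longrightarrow> tensor_space V W \<subseteq> Xgamma D \<Gamma> \<gamma>)"
proof -
  have Wm: "w \<in> borel_measurable \<Gamma>" if "w \<in> W" for w
    using assms(8) that by (auto simp: Lp_Gamma_def)
  show ?thesis
  proof (intro conjI allI impI)
    fix r s :: real
    assume h: "r \<ge> 1 \<and> s \<ge> 2 \<and> 2 / s + 1 / r = 1 \<and> \<gamma> \<in> Lp_Gamma \<Gamma> r \<and> W \<subseteq> Lp_Gamma \<Gamma> s"
    show "tensor_space V W \<subseteq> Xgamma D \<Gamma> \<gamma>"
      by (rule tensor_Xgamma[OF assms(2,5,6,7) Wm])
        (use h young_case[OF assms(5,6)] in blast)+
  next
    assume h: "\<gamma> \<in> Lp_Gamma \<Gamma> 1 \<and> W \<subseteq> Linf_Gamma \<Gamma>"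
    show "tensor_space V W \<subseteq> Xgamma D \<Gamma> \<gamma>"
      by (rule tensor_Xgamma[OF assms(2,5,6,7) Wm])
        (use h linf_case[OF assms(5,6)] in blast)+
  qed
qed

end
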